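(* Let $k\ge1$, let $A_k$ be the matrix defined below and $\mathbf{b}=(\mathbf{w}_1,\mathbf{w}_2,c)^{\mathsf T}\in\mathbb{Z}^{2k+1}$ with $\mathbf{w}_1,\mathbf{w}_2\in\mathbb{Z}^k$, $c\in\mathbb{Z}$, and write $G=G_{A_k,\mathbf{b},\mathcal{G}(A_k)}$. If $l(\mathbf{b})=u(\mathbf{b})$, then $$\delta(G)=|\mathrm{supp}(\mathbf{w}_1+\|\mathbf{w}_1^-\|_\infty\mathbf{1}_k)|+|\mathrm{supp}(\mathbf{w}_2+\|\mathbf{w}_2^-\|_\infty\mathbf{1}_k)|.$$ If $l(\mathbf{b})<u(\mathbf{b})$, then $$\delta(G)=\min_{j\in\{1,2\}}|\mathrm{supp}(\mathbf{w}_j+\|\mathbf{w}_j^-\|_\infty\mathbf{1}_k)|+k+2^k.$$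
   Context: $I_k$ is the $k\times k$ identity, $\mathbf{1}_k$ the all-ones vector in $\mathbb{Z}^k$. Define $$A_k=\begin{pmatrix} I_k & I_k & 0 & 0 & -\mathbf{1}_k & \mathbf{0}\\ 0&0&I_k&I_k&\mathbf{0}&-\mathbf{1}_k\\ 0&0&0&0&1&1\end{pmatrix}\in\mathbb{Z}^{(2k+1)\times(4k+2)}$$ (zero blocks of appropriate sizes; last two columns are single columns). Fiber: $\mathcal{F}_A(\mathbf{b})=\{\mathbf{u}\in\mathbb{Z}^n_{\ge0}:A\mathbf{u}=\mathbf{b}\}$. For $\mathcal{M}\subset\mathbb{Z}^n$, $G_{A,\mathbf{b},\mathcal{M}}$ is the graph on $\mathcal{F}_A(\mathbf{b})$ with distinct $\mathbf{u},\mathbf{v}$ adjacent iff $\mathbf{u}-\mathbf{v}\in\pm\mathcal{M}$. The Graver basis $\mathcal{G}(A)$ is the set of $\sqsubseteq$-minimal elements of $(\ker A\cap\mathbb{Z}^n)\setminus\{\mathbf{0}\}$, where $\mathbf{u}\sqsubseteq\mathbf{v}$ iff $u_iv_i\ge0$ and $|u_i|\le|v_i|$ for all $i$. $\delta$ denotes minimal vertex degree; $\mathrm{supp}(\mathbf{w})$ is the set of indices of nonzero entries of $\mathbf{w}$. For $\mathbf{w}\in\mathbb{Z}^k$, $\mathbf{w}^-$ has entries $\max(-w_i,0)$. $l(\mathbf{b}):=\|\mathbf{w}_1^-\|_\infty$, $u(\mathbf{b}):=c-\|\mathbf{w}_2^-\|_\infty$. *)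

theory Defs
  imports Main
begin

text \<open>Integer vectors in Z^n are represented as functions nat => int that vanish
  at indices >= n; integer m x n matrices as functions nat => nat => int
  (only entries with row < m and column < n are used).\<close>

definition int_vecs :: "nat \<Rightarrow> (nat \<Rightarrow> int) set" where
  "int_vecs n = {u. \<forall>j\<ge>n. u j = 0}"

definition mat_vec :: "nat \<Rightarrow> (nat \<Rightarrow> nat \<Rightarrow> int) \<Rightarrow> (nat \<Rightarrow> int) \<Rightarrow> nat \<Rightarrow> int" where
  "mat_vec n A u = (\<lambda>i. \<Sum>j<n. A i j * u j)"

definition fiber :: "nat \<Rightarrow> nat \<Rightarrow> (nat \<Rightarrow> nat \<Rightarrow> int) \<Rightarrow> (nat \<Rightarrow> int) \<Rightarrow> (nat \<Rightarrow> int) set" where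
  "fiber m n A b = {u \<in> int_vecs n. (\<forall>j<n. 0 \<le> u j) \<and> (\<forall>i<m. mat_vec n A u i = b i)}"

definition int_kernel :: "nat \<Rightarrow> nat \<Rightarrow> (nat \<Rightarrow> nat \<Rightarrow> int) \<Rightarrow> (nat \<Rightarrow> int) set" where
  "int_kernel m n A = {u \<in> int_vecs n. \<forall>i<m. mat_vec n A u i = 0}"

definition conformal_le :: "(nat \<Rightarrow> int) \<Rightarrow> (nat \<Rightarrow> int) \<Rightarrow> bool" where
  "conformal_le u v \<longleftrightarrow> (\<forall>i. 0 \<le> u i * v i \<and> \<bar>u i\<bar> \<le> \<bar>v i\<bar>)"

definition graver_basis :: "nat \<Rightarrow> nat \<Rightarrow> (nat \<Rightarrow> nat \<Rightarrow> int) \<Rightarrow> (nat \<Rightarrow> int) set" where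
  "graver_basis m n A =
     {u \<in> int_kernel m n A - {\<lambda>_. 0}. \<forall>v \<in> int_kernel m n A - {\<lambda>_. 0}. conformal_le v u \<longrightarrow> v = u}"

definition fiber_adj :: "(nat \<Rightarrow> int) set \<Rightarrow> (nat \<Rightarrow> int) \<Rightarrow> (nat \<Rightarrow> int) \<Rightarrow> bool" where
  "fiber_adj M u v \<longleftrightarrow> u \<noteq> v \<and> ((\<lambda>i. u i - v i) \<in> M \<or> (\<lambda>i. v i - u i) \<in> M)"

definition fiber_degree :: "nat \<Rightarrow> nat \<Rightarrow> (nat \<Rightarrow> nat \<Rightarrow> int) \<Rightarrow> (nat \<Rightarrow> int) \<Rightarrow> (nat \<Rightarrow> int) set
    \<Rightarrow> (nat \<Rightarrow> int) \<Rightarrow> nat" where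
  "fiber_degree m n A b M u = card {v \<in> fiber m n A b. fiber_adj M u v}"

definition min_degree :: "nat \<Rightarrow> nat \<Rightarrow> (nat \<Rightarrow> nat \<Rightarrow> int) \<Rightarrow> (nat \<Rightarrow> int) \<Rightarrow> (nat \<Rightarrow> int) set \<Rightarrow> nat" where
  "min_degree m n A b M = Min (fiber_degree m n A b M ` fiber m n A b)"

text \<open>The matrix A_k of size (2k+1) x (4k+2). Columns 0..k-1, k..2k-1, 2k..3k-1,
  3k..4k-1 are the four identity blocks, column 4k and column 4k+1 the two last columns.
  Rows 0..k-1, k..2k-1 and row 2k.\<close>
definition A_mat :: "nat \<Rightarrow> nat \<Rightarrow> nat \<Rightarrow> int" where
  "A_mat k i j =
     (if i < k then (if j = i \<or> j = k + i then 1 else if j = 4*k then -1 else 0)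
      else if i < 2*k then (if j = k + i \<or> j = 2*k + i then 1 else if j = 4*k + 1 then -1 else 0)
      else if i = 2*k then (if j = 4*k \<or> j = 4*k + 1 then 1 else 0)
      else 0)"

definition b_vec :: "nat \<Rightarrow> (nat \<Rightarrow> int) \<Rightarrow> (nat \<Rightarrow> int) \<Rightarrow> int \<Rightarrow> nat \<Rightarrow> int" where
  "b_vec k w1 w2 c i =
     (if i < k then w1 i else if i < 2*k then w2 (i - k) else if i = 2*k then c else 0)"

definition neg_inf_norm :: "nat \<Rightarrow> (nat \<Rightarrow> int) \<Rightarrow> int" where
  "neg_inf_norm k w = Max ((\<lambda>i. max (- w i) 0) ` {..<k})"

definition supp_card_shift :: "nat \<Rightarrow> (nat \<Rightarrow> int) \<Rightarrow> int \<Rightarrow> nat" where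
  "supp_card_shift k w a = card {i. i < k \<and> w i + a \<noteq> 0}"

definition l_b :: "nat \<Rightarrow> (nat \<Rightarrow> int) \<Rightarrow> int" where
  "l_b k w1 = neg_inf_norm k w1"

definition u_b :: "nat \<Rightarrow> (nat \<Rightarrow> int) \<Rightarrow> int \<Rightarrow> int" where
  "u_b k w2 c = c - neg_inf_norm k w2"

end

theory Submission imports Defs begin

lemma row1: "i < k \<Longrightarrow> mat_vec (4*k+2) (A_mat k) u i = u i + u (k+i) - u (4*k)"
proof -
  assume i: "i<k"
  have "\<And>j. A_mat k i j * u j = (if j = i then u i else 0) + (if j = k+i then u (k+i) else 0) - (if j = 4*k then u (4*k) else 0)"
    using i by (auto simp: A_mat_def)
  then show ?thesis using i by (simp add: mat_vec_def sum.distrib sum_subtractf)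
qed

lemma row2: "i < k \<Longrightarrow> mat_vec (4*k+2) (A_mat k) u (k+i) = u (2*k+i) + u (3*k+i) - u (4*k+1)"
proof -
  assume i: "i<k"
  have "\<And>j. A_mat k (k+i) j * u j = (if j = 2*k+i then u (2*k+i) else 0) + (if j = 3*k+i then u (3*k+i) else 0) - (if j = 4*k+1 then u (4*k+1) else 0)"
    using i by (auto simp: A_mat_def)
  then show ?thesis using i by (simp add: mat_vec_def sum.distrib sum_subtractf)
qed

lemma row3: "mat_vec (4*k+2) (A_mat k) u (2*k) = u (4*k) + u (4*k+1)"
proof -
  have "\<And>j. A_mat k (2*k) j * u j = (if j = 4*k then u (4*k) else 0) + (if j = 4*k+1 then u (4*k+1) else 0)"
    by (auto simp: A_mat_def)
  then show ?thesis by (simp add: mat_vec_def sum.distrib)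
qed

lemma rows_iff:
  "(\<forall>i<2*k+1. mat_vec (4*k+2) (A_mat k) u i = b i) \<longleftrightarrow>
   (\<forall>i<k. u i + u (k+i) - u (4*k) = b i) \<and> (\<forall>i<k. u (2*k+i) + u (3*k+i) - u (4*k+1) = b (k+i))
   \<and> u (4*k) + u (4*k+1) = b (2*k)"
proof
  assume H: "\<forall>i<2*k+1. mat_vec (4*k+2) (A_mat k) u i = b i"
  show "(\<forall>i<k. u i + u (k+i) - u (4*k) = b i) \<and> (\<forall>i<k. u (2*k+i) + u (3*k+i) - u (4*k+1) = b (k+i))
   \<and> u (4*k) + u (4*k+1) = b (2*k)"
  proof (intro conjI allI impI)
    fix i assume "i<k" thus "u i + u (k+i) - u (4*k) = b i" using H[rule_format, of i] row1 by auto
  next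
    fix i assume "i<k" thus "u (2*k+i) + u (3*k+i) - u (4*k+1) = b (k+i)" using H[rule_format, of "k+i"] row2 by auto
  next
    show "u (4*k) + u (4*k+1) = b (2*k)" using H[rule_format, of "2*k"] row3 by auto
  qed
next
  assume H: "(\<forall>i<k. u i + u (k+i) - u (4*k) = b i) \<and> (\<forall>i<k. u (2*k+i) + u (3*k+i) - u (4*k+1) = b (k+i))
   \<and> u (4*k) + u (4*k+1) = b (2*k)"
  show "\<forall>i<2*k+1. mat_vec (4*k+2) (A_mat k) u i = b i"
  proof (intro allI impI)
    fix i assume i: "i < 2*k+1"
    consider "i<k" | "k \<le> i" "i < 2*k" | "i = 2*k" using i by linarith
    then show "mat_vec (4*k+2) (A_mat k) u i = b i"
    proof cases
      case 1 thus ?thesis using H row1 by auto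
    next
      case 2
      then obtain i' where "i = k+i'" "i'<k" by (metis add.commute le_add_diff_inverse2 less_diff_conv2 mult_2)
      thus ?thesis using H row2 by auto
    next
      case 3 thus ?thesis using H row3 by auto
    qed
  qed
qed


definition addv :: "(nat \<Rightarrow> int) \<Rightarrow> (nat \<Rightarrow> int) \<Rightarrow> nat \<Rightarrow> int" where
  "addv u g = (\<lambda>j. u j + g j)"
definition negv :: "(nat \<Rightarrow> int) \<Rightarrow> nat \<Rightarrow> int" where
  "negv g = (\<lambda>j. - g j)"
definition swx :: "nat \<Rightarrow> nat \<Rightarrow> nat \<Rightarrow> int" where
  "swx k i = (\<lambda>j. if j = i then 1 else if j = k+i then -1 else 0)"
definition swz :: "nat \<Rightarrow> nat \<Rightarrow> nat \<Rightarrow> int" where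
  "swz k i = (\<lambda>j. if j = 2*k+i then 1 else if j = 3*k+i then -1 else 0)"
definition mvS :: "nat \<Rightarrow> nat set \<Rightarrow> nat set \<Rightarrow> nat \<Rightarrow> int" where
  "mvS k S T = (\<lambda>j. if j < k then (if j \<in> S then 1 else 0)
     else if j < 2*k then (if j-k \<notin> S then 1 else 0)
     else if j < 3*k then (if j-2*k \<in> T then -1 else 0)
     else if j < 4*k then (if j-3*k \<notin> T then -1 else 0)
     else if j = 4*k then 1 else if j = 4*k+1 then -1 else 0)"

lemma negv_negv[simp]: "negv (negv g) = g" by (simp add: negv_def)
lemma negv_app[simp]: "negv g j = - g j" by (simp add: negv_def)
lemma addv_app[simp]: "addv u g j = u j + g j" by (simp add: addv_def)

lemma conf_01: "conformal_le v g \<Longrightarrow> \<bar>g j\<bar> \<le> 1 \<Longrightarrow> v j = 0 \<or> v j = g j"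
proof -
  assume a: "conformal_le v g" "\<bar>g j\<bar> \<le> 1"
  have h: "0 \<le> v j * g j" "\<bar>v j\<bar> \<le> \<bar>g j\<bar>" using a(1) unfolding conformal_le_def by auto
  have "g j = 0 \<or> g j = 1 \<or> g j = -1" using a(2) by arith
  then show ?thesis using h by auto
qed

locale p3 =
  fixes k :: nat and w1 w2 :: "nat \<Rightarrow> int" and c :: int
  assumes k1: "1 \<le> k"
begin

abbreviation "GB \<equiv> graver_basis (2*k+1) (4*k+2) (A_mat k)"
abbreviation "KK \<equiv> int_kernel (2*k+1) (4*k+2) (A_mat k)"
abbreviation "FF \<equiv> fiber (2*k+1) (4*k+2) (A_mat k) (b_vec k w1 w2 c)"

lemma all_blocks:
  assumes "\<And>j. 4*k+2 \<le> j \<Longrightarrow> P j" "\<And>i. i<k \<Longrightarrow> P i" "\<And>i. i<k \<Longrightarrow> P (k+i)"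
    "\<And>i. i<k \<Longrightarrow> P (2*k+i)" "\<And>i. i<k \<Longrightarrow> P (3*k+i)" "P (4*k)" "P (4*k+1)"
  shows "P j"
proof -
  consider "4*k+2 \<le> j" | "j < k" | "k \<le> j" "j < 2*k" | "2*k \<le> j" "j < 3*k" | "3*k \<le> j" "j < 4*k"
    | "j = 4*k" | "j = 4*k+1" by linarith
  then show ?thesis
  proof cases
    case 3 then show ?thesis using assms(3)[of "j-k"] by auto
  next
    case 4 then show ?thesis using assms(4)[of "j-2*k"] by auto
  next
    case 5 then show ?thesis using assms(5)[of "j-3*k"] by auto
  qed (use assms in auto)
qed

lemma vec_eqI:
  assumes "\<And>j. 4*k+2 \<le> j \<Longrightarrow> u j = v j" "\<And>i. i<k \<Longrightarrow> u i = v i" "\<And>i. i<k \<Longrightarrow> u (k+i) = v (k+i)"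
    "\<And>i. i<k \<Longrightarrow> u (2*k+i) = v (2*k+i)" "\<And>i. i<k \<Longrightarrow> u (3*k+i) = v (3*k+i)" "u (4*k) = v (4*k)" "u (4*k+1) = v (4*k+1)"
  shows "u = v"
proof
  fix j show "u j = v j" by (rule all_blocks[of "\<lambda>j. u j = v j"]) (use assms in auto)
qed

lemma fiber_iff:
  "u \<in> FF \<longleftrightarrow> (\<forall>j\<ge>4*k+2. u j = 0) \<and> (\<forall>j<4*k+2. 0 \<le> u j) \<and>
     (\<forall>i<k. u i + u (k+i) - u (4*k) = w1 i) \<and> (\<forall>i<k. u (2*k+i) + u (3*k+i) - u (4*k+1) = w2 i)
     \<and> u (4*k) + u (4*k+1) = c"
  unfolding fiber_def int_vecs_def mem_Collect_eq rows_iff by (simp add: b_vec_def)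

lemma kernel_iff:
  "u \<in> KK \<longleftrightarrow> (\<forall>j\<ge>4*k+2. u j = 0) \<and>
     (\<forall>i<k. u i + u (k+i) = u (4*k)) \<and> (\<forall>i<k. u (2*k+i) + u (3*k+i) = u (4*k+1))
     \<and> u (4*k) + u (4*k+1) = 0"
  unfolding int_kernel_def int_vecs_def mem_Collect_eq rows_iff by (auto simp: algebra_simps)

lemma swx_app: "i < k \<Longrightarrow> i' < k \<Longrightarrow>
   swx k i i' = (if i' = i then 1 else 0) \<and> swx k i (k+i') = (if i' = i then -1 else 0) \<and>
   swx k i (2*k+i') = 0 \<and> swx k i (3*k+i') = 0"
  by (auto simp: swx_def)
lemma swx_app2: "i < k \<Longrightarrow> swx k i (4*k) = 0 \<and> swx k i (4*k+1) = 0 \<and> (4*k+2 \<le> j \<longrightarrow> swx k i j = 0)"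
  by (auto simp: swx_def)
lemma swz_app: "i < k \<Longrightarrow> i' < k \<Longrightarrow>
   swz k i i' = 0 \<and> swz k i (k+i') = 0 \<and>
   swz k i (2*k+i') = (if i' = i then 1 else 0) \<and> swz k i (3*k+i') = (if i' = i then -1 else 0)"
  by (auto simp: swz_def)
lemma swz_app2: "i < k \<Longrightarrow> swz k i (4*k) = 0 \<and> swz k i (4*k+1) = 0 \<and> (4*k+2 \<le> j \<longrightarrow> swz k i j = 0)"
  by (auto simp: swz_def)
lemma mvS_app: "i < k \<Longrightarrow>
   mvS k S T i = (if i \<in> S then 1 else 0) \<and> mvS k S T (k+i) = (if i \<notin> S then 1 else 0) \<and>
   mvS k S T (2*k+i) = (if i \<in> T then -1 else 0) \<and> mvS k S T (3*k+i) = (if i \<notin> T then -1 else 0)"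
  by (auto simp: mvS_def)
lemma mvS_app2: "mvS k S T (4*k) = 1 \<and> mvS k S T (4*k+1) = -1 \<and> (4*k+2 \<le> j \<longrightarrow> mvS k S T j = 0)"
  using k1 by (auto simp: mvS_def)

lemma neg_kernel: "g \<in> KK \<Longrightarrow> negv g \<in> KK"
  unfolding kernel_iff by (auto simp: algebra_simps)

lemma conf_neg: "conformal_le (negv v) (negv g) = conformal_le v g"
  unfolding conformal_le_def by simp

lemma negv_zero: "negv g = (\<lambda>_. 0) \<longleftrightarrow> g = (\<lambda>_. 0)"
  by (metis negv_def negv_negv minus_zero)

lemma GB_neg: assumes "g \<in> GB" shows "negv g \<in> GB"
proof -
  have g: "g \<in> KK" "g \<noteq> (\<lambda>_. 0)" "\<And>v. v \<in> KK \<Longrightarrow> v \<noteq> (\<lambda>_. 0) \<Longrightarrow> conformal_le v g \<Longrightarrow> v = g"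
    using assms unfolding graver_basis_def by auto
  show ?thesis unfolding graver_basis_def
  proof (intro CollectI conjI ballI impI)
    show "negv g \<in> KK - {\<lambda>_. 0}" using g neg_kernel negv_zero by auto
  next
    fix v assume v: "v \<in> KK - {\<lambda>_. 0}" "conformal_le v (negv g)"
    have "negv v = g" using g(3)[of "negv v"] v neg_kernel negv_zero conf_neg[of "negv v" g] by auto
    thus "v = negv g" by auto
  qed
qed

lemma GB_I:
  assumes "g \<in> KK" "g \<noteq> (\<lambda>_. 0)" "\<And>v. v \<in> KK \<Longrightarrow> v \<noteq> (\<lambda>_. 0) \<Longrightarrow> conformal_le v g \<Longrightarrow> v = g"
  shows "g \<in> GB" using assms unfolding graver_basis_def by auto

lemma GB_D:
  assumes "g \<in> GB"
  shows "g \<in> KK" "g \<noteq> (\<lambda>_. 0)" "\<And>v. v \<in> KK \<Longrightarrow> v \<noteq> (\<lambda>_. 0) \<Longrightarrow> conformal_le v g \<Longrightarrow> v = g"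
  using assms unfolding graver_basis_def by auto

lemma swx_GB: assumes i: "i < k" shows "swx k i \<in> GB"
proof (rule GB_I)
  show "swx k i \<in> KK" unfolding kernel_iff using i swx_app swx_app2 by auto
  show "swx k i \<noteq> (\<lambda>_. 0)" by (metis swx_def one_neq_zero)
  fix v assume v: "v \<in> KK" "v \<noteq> (\<lambda>_. 0)" "conformal_le v (swx k i)"
  have a: "\<And>j. v j = 0 \<or> v j = swx k i j"
    by (rule conf_01[OF v(3)]) (simp add: swx_def)
  have r: "v i + v (k+i) = v (4*k)" using v(1) i unfolding kernel_iff by auto
  have "v (4*k) = 0" using a[of "4*k"] swx_app2[OF i] by auto
  show "v = swx k i"
  proof (cases "v i = 0")
    case True
    then have "v (k+i) = 0" using r \<open>v (4*k) = 0\<close> by simp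
    then have "v = (\<lambda>_. 0)"
    proof -
      have "\<And>j. v j = 0" using a True \<open>v (k+i) = 0\<close> unfolding swx_def by (metis (full_types))
      thus ?thesis by auto
    qed
    then show ?thesis using v(2) by simp
  next
    case False
    then have "v i = 1" using a[of i] by (simp add: swx_def)
    then have "v (k+i) = -1" using r \<open>v (4*k) = 0\<close> by simp
    show ?thesis
    proof
      fix j show "v j = swx k i j"
        using a[of j] \<open>v i = 1\<close> \<open>v (k+i) = -1\<close> unfolding swx_def by (cases "j = i"; cases "j = k+i"; auto)
    qed
  qed
qed

lemma swz_GB: assumes i: "i < k" shows "swz k i \<in> GB"
proof (rule GB_I)
  show "swz k i \<in> KK" unfolding kernel_iff using i swz_app swz_app2 by auto
  show "swz k i \<noteq> (\<lambda>_. 0)" by (metis swz_def one_neq_zero)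
  fix v assume v: "v \<in> KK" "v \<noteq> (\<lambda>_. 0)" "conformal_le v (swz k i)"
  have a: "\<And>j. v j = 0 \<or> v j = swz k i j"
    by (rule conf_01[OF v(3)]) (simp add: swz_def)
  have r: "v (2*k+i) + v (3*k+i) = v (4*k+1)" using v(1) i unfolding kernel_iff by auto
  have "v (4*k+1) = 0" using a[of "4*k+1"] swz_app2[OF i] by auto
  show "v = swz k i"
  proof (cases "v (2*k+i) = 0")
    case True
    then have "v (3*k+i) = 0" using r \<open>v (4*k+1) = 0\<close> by simp
    then have "v = (\<lambda>_. 0)"
    proof -
      have "\<And>j. v j = 0" using a True \<open>v (3*k+i) = 0\<close> unfolding swz_def by (metis (full_types))
      thus ?thesis by auto
    qed
    then show ?thesis using v(2) by simp
  next
    case False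
    then have "v (2*k+i) = 1" using a[of "2*k+i"] by (simp add: swz_def)
    then have "v (3*k+i) = -1" using r \<open>v (4*k+1) = 0\<close> by simp
    show ?thesis
    proof
      fix j show "v j = swz k i j"
        using a[of j] \<open>v (2*k+i) = 1\<close> \<open>v (3*k+i) = -1\<close> unfolding swz_def by (cases "j = 2*k+i"; cases "j = 3*k+i"; auto)
    qed
  qed
qed

lemma mvS_GB: "mvS k S T \<in> GB"
proof (rule GB_I)
  show "mvS k S T \<in> KK" unfolding kernel_iff using mvS_app mvS_app2 by auto
  show "mvS k S T \<noteq> (\<lambda>_. 0)" using mvS_app2 by (metis one_neq_zero)
  fix v assume v: "v \<in> KK" "v \<noteq> (\<lambda>_. 0)" "conformal_le v (mvS k S T)"
  have a: "\<And>j. v j = 0 \<or> v j = mvS k S T j"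
    by (rule conf_01[OF v(3)]) (simp add: mvS_def)
  have kv: "\<forall>j\<ge>4*k+2. v j = 0" "\<forall>i<k. v i + v (k+i) = v (4*k)" "\<forall>i<k. v (2*k+i) + v (3*k+i) = v (4*k+1)"
     "v (4*k) + v (4*k+1) = 0" using v(1) unfolding kernel_iff by auto
  have p: "v (4*k) = 0 \<or> v (4*k) = 1" using a[of "4*k"] mvS_app2 by auto
  show "v = mvS k S T"
  proof (cases "v (4*k) = 0")
    case True
    have q: "v (4*k+1) = 0" using kv(4) True by simp
    have "v = (\<lambda>_. 0)"
    proof (rule vec_eqI)
      fix i assume i: "i<k"
      have h1: "v i = 0 \<or> v i = (if i \<in> S then 1 else 0)" "v (k+i) = 0 \<or> v (k+i) = (if i \<notin> S then 1 else 0)"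
        using a[of i] a[of "k+i"] mvS_app[OF i] by auto
      have h2: "v (2*k+i) = 0 \<or> v (2*k+i) = (if i \<in> T then -1 else 0)" "v (3*k+i) = 0 \<or> v (3*k+i) = (if i \<notin> T then -1 else 0)"
        using a[of "2*k+i"] a[of "3*k+i"] mvS_app[OF i] by auto
      have s1: "v i + v (k+i) = 0" "v (2*k+i) + v (3*k+i) = 0" using kv True q i by auto
      show "v i = 0" using h1 s1 by (auto split: if_splits)
      show "v (k+i) = 0" using h1 s1 by (auto split: if_splits)
      show "v (2*k+i) = 0" using h2 s1 by (auto split: if_splits)
      show "v (3*k+i) = 0" using h2 s1 by (auto split: if_splits)
    qed (use kv True q in auto)
    then show ?thesis using v(2) by simp
  next
    case False
    then have P: "v (4*k) = 1" using p by simp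
    have q: "v (4*k+1) = -1" using kv(4) P by simp
    show ?thesis
    proof (rule vec_eqI)
      fix i assume i: "i<k"
      have h1: "v i = 0 \<or> v i = (if i \<in> S then 1 else 0)" "v (k+i) = 0 \<or> v (k+i) = (if i \<notin> S then 1 else 0)"
        using a[of i] a[of "k+i"] mvS_app[OF i] by auto
      have h2: "v (2*k+i) = 0 \<or> v (2*k+i) = (if i \<in> T then -1 else 0)" "v (3*k+i) = 0 \<or> v (3*k+i) = (if i \<notin> T then -1 else 0)"
        using a[of "2*k+i"] a[of "3*k+i"] mvS_app[OF i] by auto
      have s1: "v i + v (k+i) = 1" "v (2*k+i) + v (3*k+i) = -1" using kv P q i by auto
      show "v i = mvS k S T i" using h1 s1 mvS_app[OF i] by (auto split: if_splits)
      show "v (k+i) = mvS k S T (k+i)" using h1 s1 mvS_app[OF i] by (auto split: if_splits)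
      show "v (2*k+i) = mvS k S T (2*k+i)" using h2 s1 mvS_app[OF i] by (auto split: if_splits)
      show "v (3*k+i) = mvS k S T (3*k+i)" using h2 s1 mvS_app[OF i] by (auto split: if_splits)
    qed (use kv P q mvS_app2 in auto)
  qed
qed

lemma GB_zero_x: assumes g: "g \<in> GB" and P: "g (4*k) = 0" and i: "i < k" and pos: "g i > 0"
  shows "g = swx k i"
proof -
  have kg: "g (k+i) = - g i" using GB_D(1)[OF g] i P unfolding kernel_iff by (auto simp: algebra_simps)
  have "conformal_le (swx k i) g" unfolding conformal_le_def
  proof
    fix j show "0 \<le> swx k i j * g j \<and> \<bar>swx k i j\<bar> \<le> \<bar>g j\<bar>"
      using pos kg unfolding swx_def by auto
  qed
  then show ?thesis using GB_D(3)[OF g, of "swx k i"] GB_D(1,2)[OF swx_GB[OF i]] by auto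
qed

lemma GB_zero_z: assumes g: "g \<in> GB" and P: "g (4*k) = 0" and i: "i < k" and pos: "g (2*k+i) > 0"
  shows "g = swz k i"
proof -
  have kg: "g (3*k+i) = - g (2*k+i)" using GB_D(1)[OF g] i P unfolding kernel_iff by (auto simp: algebra_simps)
  have "conformal_le (swz k i) g" unfolding conformal_le_def
  proof
    fix j show "0 \<le> swz k i j * g j \<and> \<bar>swz k i j\<bar> \<le> \<bar>g j\<bar>"
      using pos kg unfolding swz_def by auto
  qed
  then show ?thesis using GB_D(3)[OF g, of "swz k i"] GB_D(1,2)[OF swz_GB[OF i]] by auto
qed

lemma GB_pos: assumes g: "g \<in> GB" and P: "g (4*k) > 0"
  shows "g = mvS k {i. i<k \<and> 1 \<le> g i} {i. i<k \<and> g (2*k+i) \<le> -1}"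
proof -
  let ?S = "{i. i<k \<and> 1 \<le> g i}" and ?T = "{i. i<k \<and> g (2*k+i) \<le> -1}"
  have kv: "\<forall>j\<ge>4*k+2. g j = 0" "\<forall>i<k. g i + g (k+i) = g (4*k)" "\<forall>i<k. g (2*k+i) + g (3*k+i) = g (4*k+1)"
     "g (4*k) + g (4*k+1) = 0" using GB_D(1)[OF g] unfolding kernel_iff by auto
  have "conformal_le (mvS k ?S ?T) g" unfolding conformal_le_def
  proof
    fix j show "0 \<le> mvS k ?S ?T j * g j \<and> \<bar>mvS k ?S ?T j\<bar> \<le> \<bar>g j\<bar>"
    proof (rule all_blocks[of "\<lambda>j. 0 \<le> mvS k ?S ?T j * g j \<and> \<bar>mvS k ?S ?T j\<bar> \<le> \<bar>g j\<bar>"])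
      fix i assume i: "i<k"
      have e1: "g i + g (k+i) = g (4*k)" "g (2*k+i) + g (3*k+i) = - g (4*k)" using kv i by auto
      show "0 \<le> mvS k ?S ?T i * g i \<and> \<bar>mvS k ?S ?T i\<bar> \<le> \<bar>g i\<bar>" using mvS_app[OF i] i by auto
      show "0 \<le> mvS k ?S ?T (k+i) * g (k+i) \<and> \<bar>mvS k ?S ?T (k+i)\<bar> \<le> \<bar>g (k+i)\<bar>" using mvS_app[OF i] i e1 P by auto
      show "0 \<le> mvS k ?S ?T (2*k+i) * g (2*k+i) \<and> \<bar>mvS k ?S ?T (2*k+i)\<bar> \<le> \<bar>g (2*k+i)\<bar>" using mvS_app[OF i] i by auto
      show "0 \<le> mvS k ?S ?T (3*k+i) * g (3*k+i) \<and> \<bar>mvS k ?S ?T (3*k+i)\<bar> \<le> \<bar>g (3*k+i)\<bar>" using mvS_app[OF i] i e1 P by auto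
    qed (use mvS_app2 P kv in auto)
  qed
  then show ?thesis using GB_D(3)[OF g, of "mvS k ?S ?T"] GB_D(1,2)[OF mvS_GB] by auto
qed

lemma graver_cases:
  assumes g: "g \<in> GB"
  obtains (x) i where "i<k" "g = swx k i" | (nx) i where "i<k" "g = negv (swx k i)"
    | (z) i where "i<k" "g = swz k i" | (nz) i where "i<k" "g = negv (swz k i)"
    | (m) S T where "S \<subseteq> {..<k}" "T \<subseteq> {..<k}" "g = mvS k S T"
    | (nm) S T where "S \<subseteq> {..<k}" "T \<subseteq> {..<k}" "g = negv (mvS k S T)"
proof -
  have kv: "\<forall>j\<ge>4*k+2. g j = 0" "\<forall>i<k. g i + g (k+i) = g (4*k)" "\<forall>i<k. g (2*k+i) + g (3*k+i) = g (4*k+1)"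
     "g (4*k) + g (4*k+1) = 0" using GB_D(1)[OF g] unfolding kernel_iff by auto
  consider "g (4*k) > 0" | "g (4*k) < 0" | "g (4*k) = 0" by linarith
  then show ?thesis
  proof cases
    case 1 then show ?thesis using m[of "{i. i<k \<and> 1 \<le> g i}" "{i. i<k \<and> g (2*k+i) \<le> -1}"] GB_pos[OF g] by auto
  next
    case 2
    have "negv g (4*k) > 0" using 2 by simp
    let ?S = "{i. i<k \<and> 1 \<le> negv g i}" and ?T = "{i. i<k \<and> negv g (2*k+i) \<le> -1}"
    have e: "negv g = mvS k ?S ?T" by (rule GB_pos[OF GB_neg[OF g] \<open>negv g (4*k) > 0\<close>])
    have "negv (negv g) = negv (mvS k ?S ?T)" using e by (rule arg_cong)
    then have "g = negv (mvS k ?S ?T)" by (simp only: negv_negv)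
    then show ?thesis by (intro nm[of ?S ?T]) auto
  next
    case 3
    have "\<exists>i<k. g i \<noteq> 0 \<or> g (2*k+i) \<noteq> 0"
    proof (rule ccontr)
      assume "\<not> ?thesis"
      then have h: "\<forall>i<k. g i = 0 \<and> g (2*k+i) = 0" by auto
      have "g = (\<lambda>_. 0)" by (rule vec_eqI) (use h kv 3 in auto)
      then show False using GB_D(2)[OF g] by simp
    qed
    then obtain i where i: "i<k" "g i \<noteq> 0 \<or> g (2*k+i) \<noteq> 0" by blast
    have ng: "negv g \<in> GB" "negv g (4*k) = 0" using GB_neg[OF g] 3 by auto
    consider "g i > 0" | "g i < 0" | "g (2*k+i) > 0" | "g (2*k+i) < 0" using i(2) by linarith
    then show ?thesis
    proof cases
      case 1 then show ?thesis using GB_zero_x[OF g 3 i(1)] x i(1) by auto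
    next
      case 2 then have "negv g = swx k i" by (intro GB_zero_x[OF ng i(1)]) simp
      then have "negv (negv g) = negv (swx k i)" by (rule arg_cong)
      then have "g = negv (swx k i)" by (simp only: negv_negv)
      then show ?thesis using nx i(1) by blast
    next
      case 3 then show ?thesis using GB_zero_z[OF g \<open>g (4*k) = 0\<close> i(1)] z i(1) by auto
    next
      case 4 then have "negv g = swz k i" by (intro GB_zero_z[OF ng i(1)]) simp
      then have "negv (negv g) = negv (swz k i)" by (rule arg_cong)
      then have "g = negv (swz k i)" by (simp only: negv_negv)
      then show ?thesis using nz i(1) by blast
    qed
  qed
qed

lemma finite_box: "finite {u::nat\<Rightarrow>int. (\<forall>j\<ge>n. u j = 0) \<and> (\<forall>j<n. 0 \<le> u j \<and> u j \<le> M)}"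
proof -
  have sub: "{u::nat\<Rightarrow>int. (\<forall>j\<ge>n. u j = 0) \<and> (\<forall>j<n. 0 \<le> u j \<and> u j \<le> M)}
     \<subseteq> (\<lambda>xs j. if j<n then xs!j else 0) ` {xs. set xs \<subseteq> {0..M} \<and> length xs = n}"
  proof
    fix u :: "nat \<Rightarrow> int" assume u: "u \<in> {u. (\<forall>j\<ge>n. u j = 0) \<and> (\<forall>j<n. 0 \<le> u j \<and> u j \<le> M)}"
    have u1: "\<forall>j\<ge>n. u j = 0" "\<forall>j<n. 0 \<le> u j \<and> u j \<le> M" using u by blast+
    have e: "u = (\<lambda>j. if j<n then map u [0..<n] ! j else 0)"
    proof
      fix j show "u j = (if j<n then map u [0..<n] ! j else 0)"
        using u1(1)[rule_format, of j] by (cases "j<n") simp_all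
    qed
    have "set (map u [0..<n]) \<subseteq> {0..M}" using u1(2) by auto
    then have "map u [0..<n] \<in> {xs. set xs \<subseteq> {0..M} \<and> length xs = n}" by simp
    with e show "u \<in> (\<lambda>xs j. if j<n then xs!j else 0) ` {xs. set xs \<subseteq> {0..M} \<and> length xs = n}"
      by (rule image_eqI)
  qed
  have "finite {xs. set xs \<subseteq> {0..M::int} \<and> length xs = n}" by (rule finite_lists_length_eq) simp
  then have "finite ((\<lambda>xs j. if j<n then xs!j else 0) ` {xs. set xs \<subseteq> {0..M} \<and> length xs = n})"
    by (rule finite_imageI)
  then show ?thesis by (rule finite_subset[OF sub])
qed

lemma nin_props: "0 \<le> neg_inf_norm k w" "\<And>i. i<k \<Longrightarrow> 0 \<le> w i + neg_inf_norm k w"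
  "\<And>P. (\<forall>i<k. 0 \<le> w i + P) \<Longrightarrow> 0 \<le> P \<Longrightarrow> neg_inf_norm k w \<le> P"
proof -
  have fin: "finite ((\<lambda>i. max (- w i) 0) ` {..<k})" by auto
  have "max (- w 0) 0 \<le> neg_inf_norm k w" unfolding neg_inf_norm_def using fin k1 by (intro Max_ge) auto
  then show "0 \<le> neg_inf_norm k w" by simp
  fix i assume "i<k"
  then have "max (- w i) 0 \<le> neg_inf_norm k w" unfolding neg_inf_norm_def using fin by (intro Max_ge) auto
  then show "0 \<le> w i + neg_inf_norm k w" by simp
next
  fix P :: int assume "\<forall>i<k. 0 \<le> w i + P" "0 \<le> P"
  then show "neg_inf_norm k w \<le> P" unfolding neg_inf_norm_def using k1 by (subst Max_le_iff) (auto simp: lessThan_empty_iff)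
qed

abbreviation "ll \<equiv> neg_inf_norm k w1"
abbreviation "ub \<equiv> c - neg_inf_norm k w2"

lemma fiber_D: assumes "u \<in> FF"
  shows "\<And>j. 4*k+2 \<le> j \<Longrightarrow> u j = 0" "\<And>j. j < 4*k+2 \<Longrightarrow> 0 \<le> u j"
    "\<And>i. i<k \<Longrightarrow> u i + u (k+i) = w1 i + u (4*k)" "\<And>i. i<k \<Longrightarrow> u (2*k+i) + u (3*k+i) = w2 i + u (4*k+1)"
    "u (4*k) + u (4*k+1) = c"
proof -
  have H: "(\<forall>j\<ge>4*k+2. u j = 0) \<and> (\<forall>j<4*k+2. 0 \<le> u j) \<and>
     (\<forall>i<k. u i + u (k+i) - u (4*k) = w1 i) \<and> (\<forall>i<k. u (2*k+i) + u (3*k+i) - u (4*k+1) = w2 i)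
     \<and> u (4*k) + u (4*k+1) = c" using assms unfolding fiber_iff .
  show "\<And>j. 4*k+2 \<le> j \<Longrightarrow> u j = 0" using H by blast
  show "\<And>j. j < 4*k+2 \<Longrightarrow> 0 \<le> u j" using H by blast
  show "u (4*k) + u (4*k+1) = c" using H by blast
  fix i assume i: "i<k"
  have "u i + u (k+i) - u (4*k) = w1 i" "u (2*k+i) + u (3*k+i) - u (4*k+1) = w2 i" using H i by blast+
  then show "u i + u (k+i) = w1 i + u (4*k)" "u (2*k+i) + u (3*k+i) = w2 i + u (4*k+1)" by linarith+
qed

lemma fiber_bounds: assumes u: "u \<in> FF" shows "ll \<le> u (4*k)" "u (4*k) \<le> ub"
proof -
  note f = fiber_D[OF u]
  have "\<forall>i<k. 0 \<le> w1 i + u (4*k)"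
  proof (intro allI impI)
    fix i assume i: "i<k" then have "0 \<le> u i" "0 \<le> u (k+i)" using f(2)[of i] f(2)[of "k+i"] by auto
    then show "0 \<le> w1 i + u (4*k)" using f(3)[OF i] by linarith
  qed
  moreover have "0 \<le> u (4*k)" using f(2)[of "4*k"] by simp
  ultimately show "ll \<le> u (4*k)" by (rule nin_props(3))
  have "\<forall>i<k. 0 \<le> w2 i + u (4*k+1)"
  proof (intro allI impI)
    fix i assume i: "i<k" then have "0 \<le> u (2*k+i)" "0 \<le> u (3*k+i)" using f(2)[of "2*k+i"] f(2)[of "3*k+i"] by auto
    then show "0 \<le> w2 i + u (4*k+1)" using f(4)[OF i] by linarith
  qed
  moreover have "0 \<le> u (4*k+1)" using f(2)[of "4*k+1"] by simp
  ultimately have "neg_inf_norm k w2 \<le> u (4*k+1)" by (rule nin_props(3))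
  then show "u (4*k) \<le> ub" using f(5) by linarith
qed

lemma fiber_add: assumes "u \<in> FF" "g \<in> KK" "\<forall>j<4*k+2. 0 \<le> u j + g j" shows "addv u g \<in> FF"
proof -
  note f = fiber_D[OF assms(1)]
  have g: "\<forall>j\<ge>4*k+2. g j = 0" "\<forall>i<k. g i + g (k+i) = g (4*k)" "\<forall>i<k. g (2*k+i) + g (3*k+i) = g (4*k+1)"
     "g (4*k) + g (4*k+1) = 0" using assms(2) unfolding kernel_iff by blast+
  show ?thesis unfolding fiber_iff
  proof (intro conjI allI impI)
    fix j assume "4*k+2 \<le> j" then show "addv u g j = 0" using f(1) g(1) by simp
  next
    fix j assume "j < 4*k+2" then show "0 \<le> addv u g j" using assms(3) by simp
  next
    fix i assume i: "i<k"
    show "addv u g i + addv u g (k+i) - addv u g (4*k) = w1 i" using f(3)[OF i] g(2)[rule_format, OF i] unfolding addv_app by linarith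
    show "addv u g (2*k+i) + addv u g (3*k+i) - addv u g (4*k+1) = w2 i" using f(4)[OF i] g(3)[rule_format, OF i] unfolding addv_app by linarith
  next
    show "addv u g (4*k) + addv u g (4*k+1) = c" using f(5) g(4) by simp
  qed
qed

lemma fiber_finite: "finite FF"
proof -
  let ?M = "\<bar>c\<bar> + (\<Sum>i<k. \<bar>w1 i\<bar> + \<bar>w2 i\<bar>)"
  have sm: "\<And>i. i<k \<Longrightarrow> \<bar>w1 i\<bar> + \<bar>w2 i\<bar> \<le> (\<Sum>i<k. \<bar>w1 i\<bar> + \<bar>w2 i\<bar>)"
    by (rule member_le_sum) auto
  have s0: "0 \<le> (\<Sum>i<k. \<bar>w1 i\<bar> + \<bar>w2 i\<bar>)" by (rule sum_nonneg) auto
  have sub: "FF \<subseteq> {u::nat\<Rightarrow>int. (\<forall>j\<ge>4*k+2. u j = 0) \<and> (\<forall>j<4*k+2. 0 \<le> u j \<and> u j \<le> ?M)}"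
  proof
    fix u assume u: "u \<in> FF"
    note f = fiber_D[OF u]
    have c4: "u (4*k) \<le> \<bar>c\<bar>" "u (4*k+1) \<le> \<bar>c\<bar>" using f(5) f(2)[of "4*k"] f(2)[of "4*k+1"] by auto
    have "\<forall>j<4*k+2. u j \<le> ?M"
    proof (intro allI impI)
      fix j assume "j < 4*k+2"
      have "j < 4*k+2 \<longrightarrow> u j \<le> ?M"
      proof (rule all_blocks[of "\<lambda>j. j < 4*k+2 \<longrightarrow> u j \<le> ?M"])
        fix i assume i: "i<k"
        have a: "0 \<le> u i" "0 \<le> u (k+i)" "0 \<le> u (2*k+i)" "0 \<le> u (3*k+i)" using f(2)[of i] f(2)[of "k+i"] f(2)[of "2*k+i"] f(2)[of "3*k+i"] i by auto
        have b: "u i + u (k+i) = w1 i + u (4*k)" "u (2*k+i) + u (3*k+i) = w2 i + u (4*k+1)" using f(3)[OF i] f(4)[OF i] by auto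
        have c: "\<bar>w1 i\<bar> + \<bar>w2 i\<bar> \<le> (\<Sum>i<k. \<bar>w1 i\<bar> + \<bar>w2 i\<bar>)" by (rule sm[OF i])
        show "i < 4*k+2 \<longrightarrow> u i \<le> ?M" using a b c c4 by linarith
        show "k+i < 4*k+2 \<longrightarrow> u (k+i) \<le> ?M" using a b c c4 by linarith
        show "2*k+i < 4*k+2 \<longrightarrow> u (2*k+i) \<le> ?M" using a b c c4 by linarith
        show "3*k+i < 4*k+2 \<longrightarrow> u (3*k+i) \<le> ?M" using a b c c4 by linarith
      next
        fix j :: nat assume "4*k+2 \<le> j" then show "j < 4*k+2 \<longrightarrow> u j \<le> ?M" by simp
      next
        show "4*k < 4*k+2 \<longrightarrow> u (4*k) \<le> ?M" using c4 s0 by linarith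
      next
        show "4*k+1 < 4*k+2 \<longrightarrow> u (4*k+1) \<le> ?M" using c4 s0 by linarith
      qed
      then show "u j \<le> ?M" using \<open>j < 4*k+2\<close> by blast
    qed
    moreover have "\<forall>j\<ge>4*k+2. u j = 0" "\<forall>j<4*k+2. 0 \<le> u j" using f(1,2) by blast+
    ultimately show "u \<in> {u::nat\<Rightarrow>int. (\<forall>j\<ge>4*k+2. u j = 0) \<and> (\<forall>j<4*k+2. 0 \<le> u j \<and> u j \<le> ?M)}" by blast
  qed
  show ?thesis by (rule finite_subset[OF sub finite_box])
qed

definition wit :: "int \<Rightarrow> nat \<Rightarrow> int" where
  "wit P = (\<lambda>j. if j<k then w1 j + P else if j < 2*k then 0 else if j < 3*k then w2 (j-2*k) + (c-P)
     else if j<4*k then 0 else if j = 4*k then P else if j = 4*k+1 then c - P else 0)"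

lemma wit_app: "i < k \<Longrightarrow> wit P i = w1 i + P \<and> wit P (k+i) = 0 \<and> wit P (2*k+i) = w2 i + (c-P) \<and> wit P (3*k+i) = 0"
  by (auto simp: wit_def)
lemma wit_app2: "wit P (4*k) = P \<and> wit P (4*k+1) = c - P \<and> (4*k+2 \<le> j \<longrightarrow> wit P j = 0)"
  using k1 by (auto simp: wit_def)

lemma wit_in: assumes "ll \<le> P" "P \<le> ub" shows "wit P \<in> FF"
proof -
  have n1: "0 \<le> ll" "0 \<le> neg_inf_norm k w2" by (rule nin_props(1))+
  show ?thesis unfolding fiber_iff
  proof (intro conjI allI impI)
    fix j :: nat assume "4*k+2 \<le> j" then show "wit P j = 0" using wit_app2 by auto
  next
    fix j :: nat assume j: "j < 4*k+2"
    have "j < 4*k+2 \<longrightarrow> 0 \<le> wit P j"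
    proof (rule all_blocks[of "\<lambda>j. j < 4*k+2 \<longrightarrow> 0 \<le> wit P j"])
      fix i assume i: "i<k"
      have "0 \<le> w1 i + ll" "0 \<le> w2 i + neg_inf_norm k w2" using nin_props(2)[OF i] by auto
      then show "i < 4*k+2 \<longrightarrow> 0 \<le> wit P i" "k+i < 4*k+2 \<longrightarrow> 0 \<le> wit P (k+i)"
        "2*k+i < 4*k+2 \<longrightarrow> 0 \<le> wit P (2*k+i)" "3*k+i < 4*k+2 \<longrightarrow> 0 \<le> wit P (3*k+i)"
        using wit_app[OF i] assms by auto
    next
      fix j :: nat assume "4*k+2 \<le> j" then show "j < 4*k+2 \<longrightarrow> 0 \<le> wit P j" by simp
    next
      show "4*k < 4*k+2 \<longrightarrow> 0 \<le> wit P (4*k)" using wit_app2 assms n1 by auto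
    next
      show "4*k+1 < 4*k+2 \<longrightarrow> 0 \<le> wit P (4*k+1)" using wit_app2 assms n1 by auto
    qed
    then show "0 \<le> wit P j" using j by blast
  next
    fix i assume i: "i<k"
    show "wit P i + wit P (k+i) - wit P (4*k) = w1 i" using wit_app[OF i] wit_app2 by simp
    show "wit P (2*k+i) + wit P (3*k+i) - wit P (4*k+1) = w2 i" using wit_app[OF i] wit_app2 by simp
  next
    show "wit P (4*k) + wit P (4*k+1) = c" using wit_app2 by simp
  qed
qed

definition NB :: "(nat \<Rightarrow> int) \<Rightarrow> (nat \<Rightarrow> int) set" where
  "NB u = {v \<in> FF. fiber_adj GB u v}"

lemma nb_I: assumes "g \<in> GB \<or> negv g \<in> GB" "addv u g \<in> FF" shows "addv u g \<in> NB u"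
proof -
  have gz: "g \<noteq> (\<lambda>_. 0)" using assms(1) GB_D(2) negv_zero by blast
  have "u \<noteq> addv u g"
  proof
    assume "u = addv u g"
    then have "\<And>j. g j = 0" by (metis add_cancel_left_right addv_app)
    then show False using gz by auto
  qed
  moreover have "(\<lambda>i. u i - addv u g i) = negv g" "(\<lambda>i. addv u g i - u i) = g" by (auto simp: negv_def)
  ultimately show ?thesis using assms unfolding NB_def fiber_adj_def by auto
qed

lemma nb_D: assumes "v \<in> NB u" shows "v \<in> FF" "\<exists>g. (g \<in> GB \<or> negv g \<in> GB) \<and> v = addv u g"
proof -
  show "v \<in> FF" using assms unfolding NB_def by auto
  have a: "(\<lambda>i. u i - v i) \<in> GB \<or> (\<lambda>i. v i - u i) \<in> GB" using assms unfolding NB_def fiber_adj_def by auto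
  have "(\<lambda>i. u i - v i) = negv (\<lambda>i. v i - u i)" by (auto simp: negv_def)
  moreover have "v = addv u (\<lambda>i. v i - u i)" by (auto simp: addv_def)
  ultimately show "\<exists>g. (g \<in> GB \<or> negv g \<in> GB) \<and> v = addv u g" using a by metis
qed

lemma negv_eq: "negv g = h \<longleftrightarrow> g = negv h" by (metis negv_negv)

lemma moves_cases:
  assumes g: "g \<in> GB \<or> negv g \<in> GB"
  obtains (x) i where "i<k" "g = swx k i" | (nx) i where "i<k" "g = negv (swx k i)"
    | (z) i where "i<k" "g = swz k i" | (nz) i where "i<k" "g = negv (swz k i)"
    | (m) S T where "S \<subseteq> {..<k}" "T \<subseteq> {..<k}" "g = mvS k S T"
    | (nm) S T where "S \<subseteq> {..<k}" "T \<subseteq> {..<k}" "g = negv (mvS k S T)"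
proof (cases "g \<in> GB")
  case True
  then show ?thesis by (rule graver_cases) (use that in auto)
next
  case False
  then have h: "negv g \<in> GB" using g by auto
  have e: "g = negv (negv g)" by simp
  show ?thesis
  proof (rule graver_cases[OF h])
    fix i assume "i<k" "negv g = swx k i" then show ?thesis using nx by (simp only: negv_eq negv_negv)
  next
    fix i assume "i<k" "negv g = negv (swx k i)" then show ?thesis using x by (simp only: negv_eq negv_negv)
  next
    fix i assume "i<k" "negv g = swz k i" then show ?thesis using nz by (simp only: negv_eq negv_negv)
  next
    fix i assume "i<k" "negv g = negv (swz k i)" then show ?thesis using z by (simp only: negv_eq negv_negv)
  next
    fix S T assume "S \<subseteq> {..<k}" "T \<subseteq> {..<k}" "negv g = mvS k S T" then show ?thesis using nm by (simp only: negv_eq negv_negv)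
  next
    fix S T assume "S \<subseteq> {..<k}" "T \<subseteq> {..<k}" "negv g = negv (mvS k S T)" then show ?thesis using m by (simp only: negv_eq negv_negv)
  qed
qed

abbreviation "I1 P \<equiv> {i. i<k \<and> w1 i + P \<noteq> 0}"
abbreviation "I2 P \<equiv> {i. i<k \<and> w2 i + (c - P) \<noteq> 0}"
definition Fv :: "int \<Rightarrow> nat" where
  "Fv P = card (I1 P) + card (I2 P) + (if P < ub then 2^k else 0) + (if ll < P then 2^k else 0)"

lemma card_pow_k: "card (Pow {..<k}) = 2^k" by (simp add: card_Pow)

lemma deg_lower: assumes u: "u \<in> FF" shows "Fv (u (4*k)) \<le> card (NB u)"
proof -
  note f = fiber_D[OF u]
  define P where "P = u (4*k)"
  have bP: "ll \<le> P" "P \<le> ub" using fiber_bounds[OF u] P_def by auto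
  have n1: "0 \<le> ll" "0 \<le> neg_inf_norm k w2" by (rule nin_props(1))+
  have u4: "u (4*k+1) = c - P" using f(5) P_def by simp
  define dx where "dx i = (if 1 \<le> u i then negv (swx k i) else swx k i)" for i
  define dz where "dz i = (if 1 \<le> u (2*k+i) then negv (swz k i) else swz k i)" for i
  define Su where "Su = {i. i<k \<and> 1 \<le> u i}"
  define Tu where "Tu = {i. i<k \<and> 1 \<le> u (2*k+i)}"
  define X where "X = (\<lambda>i. addv u (dx i)) ` I1 P"
  define Z where "Z = (\<lambda>i. addv u (dz i)) ` I2 P"
  define Up where "Up = (if P < ub then (\<lambda>S. addv u (mvS k S Tu)) ` Pow {..<k} else {})"
  define Dn where "Dn = (if ll < P then (\<lambda>T. addv u (negv (mvS k Su T))) ` Pow {..<k} else {})"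
  have dxa: "\<And>i j. i<k \<Longrightarrow> dx i j = (if j = i then (if 1 \<le> u i then -1 else 1) else if j = k+i then (if 1 \<le> u i then 1 else -1) else 0)"
    unfolding dx_def swx_def by auto
  have dza: "\<And>i j. i<k \<Longrightarrow> dz i j = (if j = 2*k+i then (if 1 \<le> u (2*k+i) then -1 else 1) else if j = 3*k+i then (if 1 \<le> u (2*k+i) then 1 else -1) else 0)"
    unfolding dz_def swz_def by auto
  have XN: "X \<subseteq> NB u"
  proof
    fix v assume "v \<in> X"
    then obtain i where i: "i<k" "w1 i + P \<noteq> 0" and v: "v = addv u (dx i)" unfolding X_def by auto
    have G: "dx i \<in> GB \<or> negv (dx i) \<in> GB" using swx_GB[OF i(1)] unfolding dx_def by auto
    have K: "dx i \<in> KK" using G GB_D(1) neg_kernel by (metis negv_negv)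
    have s: "u i + u (k+i) = w1 i + P" using f(3)[OF i(1)] P_def by simp
    have nn: "0 \<le> u i" "0 \<le> u (k+i)" using f(2)[of i] f(2)[of "k+i"] i by auto
    have "\<forall>j<4*k+2. 0 \<le> u j + dx i j"
    proof (intro allI impI)
      fix j assume j: "j < 4*k+2"
      show "0 \<le> u j + dx i j" using dxa[OF i(1), of j] f(2)[OF j] s nn i(2) by (auto split: if_splits)
    qed
    then have "addv u (dx i) \<in> FF" by (rule fiber_add[OF u K])
    then show "v \<in> NB u" using nb_I G v by auto
  qed
  have ZN: "Z \<subseteq> NB u"
  proof
    fix v assume "v \<in> Z"
    then obtain i where i: "i<k" "w2 i + (c - P) \<noteq> 0" and v: "v = addv u (dz i)" unfolding Z_def by auto
    have G: "dz i \<in> GB \<or> negv (dz i) \<in> GB" using swz_GB[OF i(1)] unfolding dz_def by auto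
    have K: "dz i \<in> KK" using G GB_D(1) neg_kernel by (metis negv_negv)
    have s: "u (2*k+i) + u (3*k+i) = w2 i + (c - P)" using f(4)[OF i(1)] u4 by simp
    have nn: "0 \<le> u (2*k+i)" "0 \<le> u (3*k+i)" using f(2)[of "2*k+i"] f(2)[of "3*k+i"] i by auto
    have "\<forall>j<4*k+2. 0 \<le> u j + dz i j"
    proof (intro allI impI)
      fix j assume j: "j < 4*k+2"
      show "0 \<le> u j + dz i j" using dza[OF i(1), of j] f(2)[OF j] s nn i(2) by (auto split: if_splits)
    qed
    then have "addv u (dz i) \<in> FF" by (rule fiber_add[OF u K])
    then show "v \<in> NB u" using nb_I G v by auto
  qed
  have UpN: "Up \<subseteq> NB u"
  proof
    fix v assume "v \<in> Up"
    then obtain S where lt: "P < ub" and v: "v = addv u (mvS k S Tu)" unfolding Up_def by (auto split: if_splits)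
    have q: "neg_inf_norm k w2 < u (4*k+1)" using lt u4 by simp
    have "\<forall>j<4*k+2. 0 \<le> u j + mvS k S Tu j"
    proof (intro allI impI)
      fix j :: nat assume j: "j < 4*k+2"
      have "j < 4*k+2 \<longrightarrow> 0 \<le> u j + mvS k S Tu j"
      proof (rule all_blocks[of "\<lambda>j. j < 4*k+2 \<longrightarrow> 0 \<le> u j + mvS k S Tu j"])
        fix i assume i: "i<k"
        have nn: "0 \<le> u i" "0 \<le> u (k+i)" "0 \<le> u (2*k+i)" "0 \<le> u (3*k+i)" using f(2)[of i] f(2)[of "k+i"] f(2)[of "2*k+i"] f(2)[of "3*k+i"] i by auto
        have s: "u (2*k+i) + u (3*k+i) = w2 i + u (4*k+1)" using f(4)[OF i] by simp
        have w: "0 \<le> w2 i + neg_inf_norm k w2" by (rule nin_props(2)[OF i])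
        show "i < 4*k+2 \<longrightarrow> 0 \<le> u i + mvS k S Tu i" using mvS_app[OF i] nn by auto
        show "k+i < 4*k+2 \<longrightarrow> 0 \<le> u (k+i) + mvS k S Tu (k+i)" using mvS_app[OF i] nn by auto
        show "2*k+i < 4*k+2 \<longrightarrow> 0 \<le> u (2*k+i) + mvS k S Tu (2*k+i)" using mvS_app[OF i] nn unfolding Tu_def by auto
        show "3*k+i < 4*k+2 \<longrightarrow> 0 \<le> u (3*k+i) + mvS k S Tu (3*k+i)" using mvS_app[OF i] nn s w q i unfolding Tu_def by auto
      next
        fix j :: nat assume "4*k+2 \<le> j" then show "j < 4*k+2 \<longrightarrow> 0 \<le> u j + mvS k S Tu j" by simp
      next
        show "4*k < 4*k+2 \<longrightarrow> 0 \<le> u (4*k) + mvS k S Tu (4*k)" using mvS_app2 f(2)[of "4*k"] by auto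
      next
        show "4*k+1 < 4*k+2 \<longrightarrow> 0 \<le> u (4*k+1) + mvS k S Tu (4*k+1)" using mvS_app2 q n1 by auto
      qed
      then show "0 \<le> u j + mvS k S Tu j" using j by blast
    qed
    then have "addv u (mvS k S Tu) \<in> FF" using fiber_add[OF u GB_D(1)[OF mvS_GB]] by blast
    then show "v \<in> NB u" using nb_I mvS_GB v by auto
  qed
  have DnN: "Dn \<subseteq> NB u"
  proof
    fix v assume "v \<in> Dn"
    then obtain T where lt: "ll < P" and v: "v = addv u (negv (mvS k Su T))" unfolding Dn_def by (auto split: if_splits)
    have "\<forall>j<4*k+2. 0 \<le> u j + negv (mvS k Su T) j"
    proof (intro allI impI)
      fix j :: nat assume j: "j < 4*k+2"
      have "j < 4*k+2 \<longrightarrow> 0 \<le> u j + negv (mvS k Su T) j"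
      proof (rule all_blocks[of "\<lambda>j. j < 4*k+2 \<longrightarrow> 0 \<le> u j + negv (mvS k Su T) j"])
        fix i assume i: "i<k"
        have nn: "0 \<le> u i" "0 \<le> u (k+i)" "0 \<le> u (2*k+i)" "0 \<le> u (3*k+i)" using f(2)[of i] f(2)[of "k+i"] f(2)[of "2*k+i"] f(2)[of "3*k+i"] i by auto
        have s: "u i + u (k+i) = w1 i + P" using f(3)[OF i] P_def by simp
        have w: "0 \<le> w1 i + ll" by (rule nin_props(2)[OF i])
        show "i < 4*k+2 \<longrightarrow> 0 \<le> u i + negv (mvS k Su T) i" using mvS_app[OF i] nn unfolding Su_def by auto
        show "k+i < 4*k+2 \<longrightarrow> 0 \<le> u (k+i) + negv (mvS k Su T) (k+i)" using mvS_app[OF i] nn s w lt i unfolding Su_def by auto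
        show "2*k+i < 4*k+2 \<longrightarrow> 0 \<le> u (2*k+i) + negv (mvS k Su T) (2*k+i)" using mvS_app[OF i] nn by auto
        show "3*k+i < 4*k+2 \<longrightarrow> 0 \<le> u (3*k+i) + negv (mvS k Su T) (3*k+i)" using mvS_app[OF i] nn by auto
      next
        fix j :: nat assume "4*k+2 \<le> j" then show "j < 4*k+2 \<longrightarrow> 0 \<le> u j + negv (mvS k Su T) j" by simp
      next
        show "4*k < 4*k+2 \<longrightarrow> 0 \<le> u (4*k) + negv (mvS k Su T) (4*k)" using mvS_app2 lt n1 P_def by auto
      next
        show "4*k+1 < 4*k+2 \<longrightarrow> 0 \<le> u (4*k+1) + negv (mvS k Su T) (4*k+1)" using mvS_app2 f(2)[of "4*k+1"] by auto
      qed
      then show "0 \<le> u j + negv (mvS k Su T) j" using j by blast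
    qed
    then have "addv u (negv (mvS k Su T)) \<in> FF" using fiber_add[OF u neg_kernel[OF GB_D(1)[OF mvS_GB]]] by blast
    then show "v \<in> NB u" using nb_I mvS_GB v by auto
  qed
  have cX: "card X = card (I1 P)" unfolding X_def
  proof (rule card_image, rule inj_onI)
    fix i i' assume i: "i \<in> I1 P" and i': "i' \<in> I1 P" and e: "addv u (dx i) = addv u (dx i')"
    show "i = i'"
    proof (rule ccontr)
      assume ne: "i \<noteq> i'"
      have "addv u (dx i) i = addv u (dx i') i" using e by simp
      then show False using dxa[of i i] dxa[of i' i] i i' ne by (auto split: if_splits)
    qed
  qed
  have cZ: "card Z = card (I2 P)" unfolding Z_def
  proof (rule card_image, rule inj_onI)
    fix i i' assume i: "i \<in> I2 P" and i': "i' \<in> I2 P" and e: "addv u (dz i) = addv u (dz i')"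
    show "i = i'"
    proof (rule ccontr)
      assume ne: "i \<noteq> i'"
      have "addv u (dz i) (2*k+i) = addv u (dz i') (2*k+i)" using e by simp
      then show False using dza[of i "2*k+i"] dza[of i' "2*k+i"] i i' ne by (auto split: if_splits)
    qed
  qed
  have cUp: "card Up = (if P < ub then 2^k else 0)"
  proof (cases "P < ub")
    case True
    have "inj_on (\<lambda>S. addv u (mvS k S Tu)) (Pow {..<k})"
    proof (rule inj_onI)
      fix S S' assume S: "S \<in> Pow {..<k}" and S': "S' \<in> Pow {..<k}" and e: "addv u (mvS k S Tu) = addv u (mvS k S' Tu)"
      show "S = S'"
      proof
        show "S \<subseteq> S'"
        proof
          fix i assume "i \<in> S" then have i: "i<k" using S by auto
          have "addv u (mvS k S Tu) i = addv u (mvS k S' Tu) i" using e by simp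
          then show "i \<in> S'" using mvS_app[OF i, of S Tu] mvS_app[OF i, of S' Tu] \<open>i \<in> S\<close> by (auto split: if_splits)
        qed
        show "S' \<subseteq> S"
        proof
          fix i assume "i \<in> S'" then have i: "i<k" using S' by auto
          have "addv u (mvS k S Tu) i = addv u (mvS k S' Tu) i" using e by simp
          then show "i \<in> S" using mvS_app[OF i, of S Tu] mvS_app[OF i, of S' Tu] \<open>i \<in> S'\<close> by (auto split: if_splits)
        qed
      qed
    qed
    then show ?thesis using True unfolding Up_def by (simp add: card_image card_pow_k)
  qed (simp add: Up_def)
  have cDn: "card Dn = (if ll < P then 2^k else 0)"
  proof (cases "ll < P")
    case True
    have "inj_on (\<lambda>T. addv u (negv (mvS k Su T))) (Pow {..<k})"
    proof (rule inj_onI)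
      fix S S' assume S: "S \<in> Pow {..<k}" and S': "S' \<in> Pow {..<k}" and e: "addv u (negv (mvS k Su S)) = addv u (negv (mvS k Su S'))"
      show "S = S'"
      proof
        show "S \<subseteq> S'"
        proof
          fix i assume "i \<in> S" then have i: "i<k" using S by auto
          have "addv u (negv (mvS k Su S)) (2*k+i) = addv u (negv (mvS k Su S')) (2*k+i)" using e by simp
          then show "i \<in> S'" using mvS_app[OF i, of Su S] mvS_app[OF i, of Su S'] \<open>i \<in> S\<close> by (auto split: if_splits)
        qed
        show "S' \<subseteq> S"
        proof
          fix i assume "i \<in> S'" then have i: "i<k" using S' by auto
          have "addv u (negv (mvS k Su S)) (2*k+i) = addv u (negv (mvS k Su S')) (2*k+i)" using e by simp
          then show "i \<in> S" using mvS_app[OF i, of Su S] mvS_app[OF i, of Su S'] \<open>i \<in> S'\<close> by (auto split: if_splits)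
        qed
      qed
    qed
    then show ?thesis using True unfolding Dn_def by (simp add: card_image card_pow_k)
  qed (simp add: Dn_def)
  have X4: "\<forall>v\<in>X. v (4*k) = P" unfolding X_def using dxa P_def by auto
  have Z4: "\<forall>v\<in>Z. v (4*k) = P" unfolding Z_def using dza P_def by auto
  have U4: "\<forall>v\<in>Up. v (4*k) = P + 1" unfolding Up_def using mvS_app2 P_def by auto
  have D4: "\<forall>v\<in>Dn. v (4*k) = P - 1" unfolding Dn_def using mvS_app2 P_def by auto
  have Xi: "\<forall>v\<in>X. \<exists>i<k. v i \<noteq> u i"
  proof
    fix v assume "v \<in> X"
    then obtain i where i: "i<k" "v = addv u (dx i)" unfolding X_def by auto
    then have "v i \<noteq> u i" using dxa[OF i(1), of i] by auto
    then show "\<exists>i<k. v i \<noteq> u i" using i by blast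
  qed
  have Zi: "\<forall>v\<in>Z. \<forall>i<k. v i = u i" unfolding Z_def using dza by auto
  have fin: "finite X" "finite Z" "finite Up" "finite Dn" unfolding X_def Z_def Up_def Dn_def by auto
  have d1: "X \<inter> Z = {}" using Xi Zi by fastforce
  have d2: "(X \<union> Z) \<inter> Up = {}" using X4 Z4 U4 by fastforce
  have d3: "(X \<union> Z \<union> Up) \<inter> Dn = {}" using X4 Z4 U4 D4 by fastforce
  have "card (X \<union> Z \<union> Up \<union> Dn) = card X + card Z + card Up + card Dn"
    using fin d1 d2 d3 by (simp add: card_Un_disjoint)
  also have "\<dots> = Fv P" unfolding Fv_def using cX cZ cUp cDn by simp
  finally have "Fv P = card (X \<union> Z \<union> Up \<union> Dn)" by simp
  also have "\<dots> \<le> card (NB u)"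
  proof (rule card_mono)
    show "finite (NB u)" using fiber_finite unfolding NB_def by auto
    show "X \<union> Z \<union> Up \<union> Dn \<subseteq> NB u" using XN ZN UpN DnN by auto
  qed
  finally show ?thesis using P_def by simp
qed

lemma deg_upper: assumes P: "ll \<le> P" "P \<le> ub" shows "card (NB (wit P)) \<le> Fv P"
proof -
  define X where "X = (\<lambda>i. addv (wit P) (negv (swx k i))) ` I1 P"
  define Z where "Z = (\<lambda>i. addv (wit P) (negv (swz k i))) ` I2 P"
  define Up where "Up = (if P < ub then (\<lambda>S. addv (wit P) (mvS k S {..<k})) ` Pow {..<k} else {})"
  define Dn where "Dn = (if ll < P then (\<lambda>T. addv (wit P) (negv (mvS k {..<k} T))) ` Pow {..<k} else {})"
  have sub: "NB (wit P) \<subseteq> X \<union> Z \<union> Up \<union> Dn"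
  proof
    fix v assume v: "v \<in> NB (wit P)"
    have vF: "v \<in> FF" using nb_D(1)[OF v] .
    note f = fiber_D[OF vF]
    obtain g where g: "g \<in> GB \<or> negv g \<in> GB" and vg: "v = addv (wit P) g" using nb_D(2)[OF v] by blast
    show "v \<in> X \<union> Z \<union> Up \<union> Dn"
    proof (rule moves_cases[OF g])
      fix i assume i: "i<k" and e: "g = swx k i"
      have "v (k+i) = -1" using vg e wit_app[OF i] swx_app[OF i i] by simp
      then show ?thesis using f(2)[of "k+i"] i by simp
    next
      fix i assume i: "i<k" and e: "g = negv (swx k i)"
      have "v i = w1 i + P - 1" using vg e wit_app[OF i] swx_app[OF i i] by simp
      then have "i \<in> I1 P" using f(2)[of i] i by simp
      then show ?thesis using vg e unfolding X_def by blast
    next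
      fix i assume i: "i<k" and e: "g = swz k i"
      have "v (3*k+i) = -1" using vg e wit_app[OF i] swz_app[OF i i] by simp
      then show ?thesis using f(2)[of "3*k+i"] i by simp
    next
      fix i assume i: "i<k" and e: "g = negv (swz k i)"
      have "v (2*k+i) = w2 i + (c - P) - 1" using vg e wit_app[OF i] swz_app[OF i i] by simp
      then have "i \<in> I2 P" using f(2)[of "2*k+i"] i by simp
      then show ?thesis using vg e unfolding Z_def by blast
    next
      fix S T assume S: "S \<subseteq> {..<k}" and T: "T \<subseteq> {..<k}" and e: "g = mvS k S T"
      have "v (4*k) = P + 1" using vg e wit_app2 mvS_app2 by simp
      then have lt: "P < ub" using fiber_bounds(2)[OF vF] by simp
      have "T = {..<k}"
      proof
        show "{..<k} \<subseteq> T"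
        proof
          fix i assume "i \<in> {..<k}" then have i: "i<k" by simp
          have "v (3*k+i) = (if i \<notin> T then -1 else 0)" using vg e wit_app[OF i] mvS_app[OF i] by simp
          then show "i \<in> T" using f(2)[of "3*k+i"] i by (auto split: if_splits)
        qed
      qed (use T in auto)
      then have "v \<in> Up" using vg e lt S unfolding Up_def by auto
      then show ?thesis by blast
    next
      fix S T assume S: "S \<subseteq> {..<k}" and T: "T \<subseteq> {..<k}" and e: "g = negv (mvS k S T)"
      have "v (4*k) = P - 1" using vg e wit_app2 mvS_app2 by simp
      then have lt: "ll < P" using fiber_bounds(1)[OF vF] by simp
      have "S = {..<k}"
      proof
        show "{..<k} \<subseteq> S"
        proof
          fix i assume "i \<in> {..<k}" then have i: "i<k" by simp
          have "v (k+i) = - (if i \<notin> S then 1 else 0)" using vg e wit_app[OF i] mvS_app[OF i] by simp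
          then show "i \<in> S" using f(2)[of "k+i"] i by (auto split: if_splits)
        qed
      qed (use S in auto)
      then have "v \<in> Dn" using vg e lt T unfolding Dn_def by auto
      then show ?thesis by blast
    qed
  qed
  have fin: "finite X" "finite Z" "finite Up" "finite Dn" unfolding X_def Z_def Up_def Dn_def by auto
  have "card (NB (wit P)) \<le> card (X \<union> Z \<union> Up \<union> Dn)" using fin sub by (intro card_mono) auto
  also have "\<dots> \<le> card X + card Z + card Up + card Dn"
    by (meson add_le_mono card_Un_le order_trans order_refl)
  also have "\<dots> \<le> Fv P"
  proof -
    have "card X \<le> card (I1 P)" unfolding X_def by (rule card_image_le) auto
    moreover have "card Z \<le> card (I2 P)" unfolding Z_def by (rule card_image_le) auto
    moreover have "card Up \<le> (if P < ub then 2^k else 0)" unfolding Up_def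
      using card_image_le[of "Pow {..<k}" "\<lambda>S. addv (wit P) (mvS k S {..<k})"] by (auto simp: card_pow_k)
    moreover have "card Dn \<le> (if ll < P then 2^k else 0)" unfolding Dn_def
      using card_image_le[of "Pow {..<k}" "\<lambda>T. addv (wit P) (negv (mvS k {..<k} T))"] by (auto simp: card_pow_k)
    ultimately show ?thesis unfolding Fv_def by linarith
  qed
  finally show ?thesis .
qed

lemma deg_wit: assumes "ll \<le> P" "P \<le> ub" shows "card (NB (wit P)) = Fv P"
  using deg_upper[OF assms] deg_lower[OF wit_in[OF assms]] wit_app2 by simp

lemma degree_eq: "fiber_degree (2*k+1) (4*k+2) (A_mat k) (b_vec k w1 w2 c) GB u = card (NB u)"
  unfolding fiber_degree_def NB_def by simp

lemma min_deg_eq: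
  assumes low: "\<And>P. ll \<le> P \<Longrightarrow> P \<le> ub \<Longrightarrow> D \<le> Fv P" and P0: "ll \<le> P0" "P0 \<le> ub" "Fv P0 = D"
  shows "min_degree (2*k+1) (4*k+2) (A_mat k) (b_vec k w1 w2 c) GB = D"
  unfolding min_degree_def
proof (rule Min_eqI)
  show "finite (fiber_degree (2*k+1) (4*k+2) (A_mat k) (b_vec k w1 w2 c) GB ` FF)" using fiber_finite by simp
next
  fix y assume "y \<in> fiber_degree (2*k+1) (4*k+2) (A_mat k) (b_vec k w1 w2 c) GB ` FF"
  then obtain u where u: "u \<in> FF" and y: "y = card (NB u)" using degree_eq by auto
  have "D \<le> Fv (u (4*k))" using low fiber_bounds[OF u] by simp
  also have "\<dots> \<le> card (NB u)" by (rule deg_lower[OF u])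
  finally show "D \<le> y" using y by simp
next
  have "D = fiber_degree (2*k+1) (4*k+2) (A_mat k) (b_vec k w1 w2 c) GB (wit P0)"
    using deg_wit[OF P0(1,2)] P0(3) degree_eq by simp
  then show "D \<in> fiber_degree (2*k+1) (4*k+2) (A_mat k) (b_vec k w1 w2 c) GB ` FF"
    using wit_in[OF P0(1,2)] by blast
qed

end


theorem proposition3:
  fixes k :: nat and w1 w2 :: "nat \<Rightarrow> int" and c :: int
  assumes "k \<ge> 1"
  defines "\<delta> \<equiv> min_degree (2*k+1) (4*k+2) (A_mat k) (b_vec k w1 w2 c)
                   (graver_basis (2*k+1) (4*k+2) (A_mat k))"
  defines "s1 \<equiv> supp_card_shift k w1 (neg_inf_norm k w1)"
  defines "s2 \<equiv> supp_card_shift k w2 (neg_inf_norm k w2)"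
  shows "(l_b k w1 = u_b k w2 c \<longrightarrow> \<delta> = s1 + s2)
       \<and> (l_b k w1 < u_b k w2 c \<longrightarrow> \<delta> = min s1 s2 + k + 2^k)"
proof -
  interpret p3 k w1 w2 c using assms(1) by unfold_locales
  let ?l = "neg_inf_norm k w1" and ?u = "c - neg_inf_norm k w2"
  have S1: "s1 = card {i. i<k \<and> w1 i + ?l \<noteq> 0}" unfolding s1_def supp_card_shift_def by simp
  have S2: "s2 = card {i. i<k \<and> w2 i + (c - ?u) \<noteq> 0}" unfolding s2_def supp_card_shift_def by simp
  have le1: "\<And>P. card {i. i<k \<and> w1 i + P \<noteq> 0} \<le> k"
    by (rule order_trans[OF card_mono[of "{..<k}"]]) auto
  have le2: "\<And>P. card {i. i<k \<and> w2 i + (c - P) \<noteq> 0} \<le> k"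
    by (rule order_trans[OF card_mono[of "{..<k}"]]) auto
  have eq1: "\<And>P. ?l < P \<Longrightarrow> card {i. i<k \<and> w1 i + P \<noteq> 0} = k"
  proof -
    fix P assume P: "?l < P"
    have "{i. i<k \<and> w1 i + P \<noteq> 0} = {..<k}" using nin_props(2)[of _ w1] P by force
    then show "card {i. i<k \<and> w1 i + P \<noteq> 0} = k" by simp
  qed
  have eq2: "\<And>P. P < ?u \<Longrightarrow> card {i. i<k \<and> w2 i + (c - P) \<noteq> 0} = k"
  proof -
    fix P assume P: "P < ?u"
    have "{i. i<k \<and> w2 i + (c - P) \<noteq> 0} = {..<k}" using nin_props(2)[of _ w2] P by force
    then show "card {i. i<k \<and> w2 i + (c - P) \<noteq> 0} = k" by simp
  qed
  have dd: "\<delta> = min_degree (2*k+1) (4*k+2) (A_mat k) (b_vec k w1 w2 c) (graver_basis (2*k+1) (4*k+2) (A_mat k))"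
    using \<delta>_def by simp
  show ?thesis
  proof (intro conjI impI)
    assume h: "l_b k w1 = u_b k w2 c"
    then have h': "?l = ?u" unfolding l_b_def u_b_def by simp
    have "min_degree (2*k+1) (4*k+2) (A_mat k) (b_vec k w1 w2 c) (graver_basis (2*k+1) (4*k+2) (A_mat k)) = s1 + s2"
    proof (rule min_deg_eq)
      fix P assume "?l \<le> P" "P \<le> ?u"
      then have "P = ?l" using h' by simp
      then show "s1 + s2 \<le> Fv P" unfolding Fv_def S1 S2 using h' by simp
    next
      show "?l \<le> ?l" "?l \<le> ?u" using h' by auto
      show "Fv ?l = s1 + s2" unfolding Fv_def S1 S2 using h' by simp
    qed
    then show "\<delta> = s1 + s2" using dd by simp
  next
    assume h: "l_b k w1 < u_b k w2 c"
    then have h': "?l < ?u" unfolding l_b_def u_b_def by simp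
    have s1k: "s1 \<le> k" "s2 \<le> k" unfolding S1 S2 by (rule le1, rule le2)
    have Fl: "Fv ?l = s1 + k + 2^k" unfolding Fv_def S1 using eq2[OF h'] h' by simp
    have Fu: "Fv ?u = k + s2 + 2^k" unfolding Fv_def S2 using eq1[OF h'] h' by simp
    have "min_degree (2*k+1) (4*k+2) (A_mat k) (b_vec k w1 w2 c) (graver_basis (2*k+1) (4*k+2) (A_mat k)) = min s1 s2 + k + 2^k"
    proof (rule min_deg_eq)
      fix P assume P: "?l \<le> P" "P \<le> ?u"
      consider "P = ?l" | "P = ?u" | "?l < P" "P < ?u" using P by linarith
      then show "min s1 s2 + k + 2^k \<le> Fv P"
      proof cases
        case 1 then show ?thesis using Fl by simp
      next
        case 2 then show ?thesis using Fu by simp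
      next
        case 3
        then have "Fv P = k + k + 2^k + 2^k" unfolding Fv_def using eq1 eq2 by simp
        then show ?thesis using s1k by simp
      qed
    next
      let ?P0 = "if s1 \<le> s2 then ?l else ?u"
      show "?l \<le> ?P0" "?P0 \<le> ?u" using h' by auto
      show "Fv ?P0 = min s1 s2 + k + 2^k" using Fl Fu by auto
    qed
    then show "\<delta> = min s1 s2 + k + 2^k" using dd by simp
  qed
qed

end
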